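(* Let $k$, $d$ and $n$ be positive integers such that $k$ is even, $d \ge 2$, and $n \ge \max\{k, \frac{d+1}{8}(k^2-2sk+4s-4) + 1\}$, where $s \in \{0,1\}$ with $s \equiv \frac{k-2}{2} \pmod 2$. Then, for any function $f:[n] \rightarrow \{-1,1\}$ such that $|f([n])| \le \min \{n-k,\frac{d-1}{d+1}n\}$, there is a zero-sum $(d,k)$-block in $[n]$, i.e. a $(d,k)$-block $A\subseteq[n]$ with $f(A)=0$.
   Context: $[n]=\{1,\dots,n\}$; $f(Y)=\sum_{y\in Y}f(y)$. A $(d,k)$-block in $[n]$ is a set $\{a_1,\dots,a_k\}\subseteq[n]$ of integers with $a_1<a_2<\dots<a_k$ and $a_{i+1}-a_i\le d$ for all $1\le i\le k-1$. *)

theory Defs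
  imports Complex_Main
begin

definition dk_block :: "nat \<Rightarrow> nat \<Rightarrow> nat \<Rightarrow> nat set \<Rightarrow> bool" where
  "dk_block d k n A \<longleftrightarrow> A \<subseteq> {1..n} \<and>
     (\<exists>a :: nat \<Rightarrow> nat. A = a ` {..<k} \<and>
        (\<forall>i. Suc i < k \<longrightarrow> a i < a (Suc i) \<and> a (Suc i) - a i \<le> d))"

end

theory Submission
  imports Defs
begin

definition gp :: "nat \<Rightarrow> nat set \<Rightarrow> bool" where
  "gp d C \<longleftrightarrow> (\<forall>x\<in>C. \<forall>w\<in>C. x < w \<longrightarrow> (\<exists>y\<in>C. x < y \<and> y \<le> w \<and> y \<le> x + d))"

lemma gp_dk:
  assumes "finite A" "A \<subseteq> {1..n}" "card A = k" "gp d A"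
  shows "dk_block d k n A"
proof -
  define xs where "xs = sorted_list_of_set A"
  have sw: "sorted_wrt (<) xs" unfolding xs_def by (simp add: strict_sorted_list_of_set)
  have len: "length xs = k" unfolding xs_def using assms by (simp add: length_sorted_list_of_set)
  have st: "set xs = A" unfolding xs_def using assms by simp
  have img: "A = (\<lambda>i. xs ! i) ` {..<k}"
    using st len by (auto simp: set_conv_nth)
  have mono: "i < j \<Longrightarrow> j < k \<Longrightarrow> xs ! i < xs ! j" for i j
    using sorted_wrt_nth_less[OF sw] len by auto
  have monor: "xs ! i < xs ! j \<Longrightarrow> j < k \<Longrightarrow> i < k \<Longrightarrow> i < j" for i j
    using mono by (metis less_asym linorder_neqE_nat)
  have "\<forall>i. Suc i < k \<longrightarrow> xs ! i < xs ! Suc i \<and> xs ! Suc i - xs ! i \<le> d"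
  proof (intro allI impI)
    fix i assume i: "Suc i < k"
    have lt: "xs ! i < xs ! Suc i" using mono i by auto
    have "xs ! i \<in> A" "xs ! Suc i \<in> A" using img i by auto
    then obtain y where y: "y \<in> A" "xs ! i < y" "y \<le> xs ! Suc i" "y \<le> xs ! i + d"
      using assms(4) lt unfolding gp_def by blast
    then obtain j where j: "j < k" "y = xs ! j" using img by auto
    have "i < j" using monor[of i j] y j i by auto
    have "y = xs ! Suc i"
    proof (rule ccontr)
      assume "y \<noteq> xs ! Suc i"
      then have "y < xs ! Suc i" using y by auto
      then have "j < Suc i" using monor[of j "Suc i"] j i by auto
      then show False using \<open>i < j\<close> by auto
    qed
    then show "xs ! i < xs ! Suc i \<and> xs ! Suc i - xs ! i \<le> d" using lt y by auto
  qed
  then show ?thesis unfolding dk_block_def using assms(2) img by blast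
qed

lemma gp_hole:
  assumes "gp d C" "d \<ge> 1" "z0 \<in> C" "z0 + 1 \<notin> C"
  shows "gp d (insert (z0+1) C)"
  unfolding gp_def
proof (intro ballI impI)
  fix x w assume x: "x \<in> insert (z0+1) C" and w: "w \<in> insert (z0+1) C" and xw: "x < w"
  show "\<exists>y\<in>insert (z0 + 1) C. x < y \<and> y \<le> w \<and> y \<le> x + d"
  proof (cases "x = z0 + 1")
    case True
    then have "w \<in> C" "z0 < w" using w xw by auto
    then obtain y where y: "y \<in> C" "z0 < y" "y \<le> w" "y \<le> z0 + d"
      using assms(1,3) unfolding gp_def by blast
    then have "y \<noteq> z0 + 1" using assms(4) by auto
    then have "z0 + 1 < y" using y by auto
    then show ?thesis using y True by (intro bexI[of _ y]) auto
  next
    case False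
    then have xC: "x \<in> C" using x by auto
    show ?thesis
    proof (cases "w = z0 + 1")
      case True
      show ?thesis
      proof (cases "x = z0")
        case True then show ?thesis using \<open>w = z0+1\<close> assms(2) by auto
      next
        case False
        then have "x < z0" using xw \<open>w = z0+1\<close> by auto
        then obtain y where "y \<in> C" "x < y" "y \<le> z0" "y \<le> x + d"
          using assms(1,3) xC unfolding gp_def by blast
        then show ?thesis using True by auto
      qed
    next
      case False
      then have "w \<in> C" using w by auto
      then obtain y where "y \<in> C" "x < y" "y \<le> w" "y \<le> x + d"
        using assms(1) xC xw unfolding gp_def by blast
      then show ?thesis by auto
    qed
  qed
qed

lemma gp_below:
  assumes "gp d C" "\<forall>c\<in>C. a < c" "a + 1 \<in> C" "d \<ge> 1"
  shows "gp d (insert a C)"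
  unfolding gp_def
proof (intro ballI impI)
  fix x w assume x: "x \<in> insert a C" and w: "w \<in> insert a C" and xw: "x < w"
  show "\<exists>y\<in>insert a C. x < y \<and> y \<le> w \<and> y \<le> x + d"
  proof (cases "x = a")
    case True
    then have "w \<in> C" using w xw by auto
    then have "a + 1 \<le> w" using assms(2) by fastforce
    then show ?thesis using True assms(3,4) by (intro bexI[of _ "a+1"]) auto
  next
    case False
    then have xC: "x \<in> C" using x by auto
    then have "w \<in> C" using w xw assms(2) by auto
    then show ?thesis using assms(1) xC xw unfolding gp_def by blast
  qed
qed

lemma gp_upto:
  assumes "gp d C"
  shows "gp d {x\<in>C. x \<le> b}"
  using assms unfolding gp_def by (metis (no_types, lifting) mem_Collect_eq order.trans)

lemma gp_union:
  assumes "gp d C1" "gp d C2" "b \<in> C1" "b \<in> C2" "\<forall>x\<in>C1. x \<le> b" "\<forall>x\<in>C2. b \<le> x"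
  shows "gp d (C1 \<union> C2)"
  unfolding gp_def
proof (intro ballI impI)
  fix x w assume x: "x \<in> C1 \<union> C2" and w: "w \<in> C1 \<union> C2" and xw: "x < w"
  show "\<exists>y\<in>C1 \<union> C2. x < y \<and> y \<le> w \<and> y \<le> x + d"
  proof (cases "x \<in> C2")
    case True
    then have "w \<in> C2" using w xw assms(5,6) by force
    then show ?thesis using assms(2) True xw unfolding gp_def by blast
  next
    case False
    then have xC: "x \<in> C1" using x by auto
    have "x \<noteq> b" using False assms(4) by auto
    then have "x < b" using assms(5) xC by force
    show ?thesis
    proof (cases "w \<in> C1")
      case True
      then show ?thesis using assms(1) xC xw unfolding gp_def by blast
    next
      case False
      then have "w \<in> C2" using w by auto
      then have "b \<le> w" using assms(6) by auto
      obtain y where "y \<in> C1" "x < y" "y \<le> b" "y \<le> x + d"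
        using assms(1,3) xC \<open>x < b\<close> unfolding gp_def by blast
      then show ?thesis using \<open>b \<le> w\<close> by auto
    qed
  qed
qed

lemma gp_ap:
  assumes "a + d * c < e" "e \<le> a + d * (c + 1)"
  shows "gp d ((\<lambda>t. a + d * t) ` {..c} \<union> {e})"
  unfolding gp_def
proof (intro ballI impI)
  fix x w assume x: "x \<in> (\<lambda>t. a + d * t) ` {..c} \<union> {e}" and w: "w \<in> (\<lambda>t. a + d * t) ` {..c} \<union> {e}" and xw: "x < w"
  have le: "t \<le> c \<Longrightarrow> a + d * t \<le> a + d * c" for t by simp
  have "x \<noteq> e"
  proof
    assume "x = e"
    then obtain t where "t \<le> c" "w = a + d*t" using xw w by auto
    then show False using le[of t] assms(1) xw \<open>x = e\<close> by linarith
  qed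
  then obtain t where t: "t \<le> c" "x = a + d * t" using x by auto
  show "\<exists>y\<in>(\<lambda>t. a + d * t) ` {..c} \<union> {e}. x < y \<and> y \<le> w \<and> y \<le> x + d"
  proof (cases "t < c")
    case True
    have "d > 0" using xw w t le assms by (cases "d = 0") auto
    have yin: "a + d * (t+1) \<in> (\<lambda>t. a + d * t) ` {..c}" using True by (intro image_eqI[of _ _ "t+1"]) auto
    have "a + d * (t+1) \<le> w"
    proof (cases "w = e")
      case True
      then show ?thesis using le[of "t+1"] \<open>t < c\<close> assms(1) by auto
    next
      case False
      then obtain t' where "t' \<le> c" "w = a + d * t'" using w by auto
      then have "t < t'" using xw t by (metis add_less_cancel_left mult_less_cancel1 not_less_iff_gr_or_eq)
      then have "d * (t+1) \<le> d * t'" by (intro mult_le_mono2) auto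
      then show ?thesis using \<open>w = a + d*t'\<close> by simp
    qed
    moreover have "x < a + d * (t+1)" "a + d * (t+1) \<le> x + d" using t \<open>d > 0\<close> by auto
    ultimately show ?thesis using yin by blast
  next
    case False
    then have "t = c" using t by auto
    have "w = e"
    proof (rule ccontr)
      assume "w \<noteq> e"
      then obtain t' where "t' \<le> c" "w = a + d * t'" using w by auto
      then show False using xw t \<open>t = c\<close> le by auto
    qed
    then show ?thesis using assms \<open>t = c\<close> t xw by (auto simp: algebra_simps)
  qed
qed

lemma closed_ivl:
  assumes "a \<in> A" "\<forall>z\<in>A. z < b \<longrightarrow> Suc z \<in> A"
  shows "{a..b} \<subseteq> A"
proof
  fix x assume "x \<in> {a..b}"
  then have "a \<le> x" "x \<le> b" by auto
  then show "x \<in> A"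
  proof (induction "x - a" arbitrary: x)
    case 0 then show ?case using assms by auto
  next
    case (Suc m)
    then have "x - 1 \<in> A" by auto
    moreover have "x - 1 < b" "Suc (x - 1) = x" using Suc.hyps(2) Suc.prems by auto
    ultimately show ?case using assms(2) by metis
  qed
qed

lemma pad:
  assumes "C \<subseteq> {1..n}" "C \<noteq> {}" "gp d C" "card C \<le> k" "k \<le> n" "d \<ge> 1"
  shows "\<exists>A. C \<subseteq> A \<and> A \<subseteq> {1..n} \<and> card A = k \<and> gp d A"
  using assms
proof (induction "k - card C" arbitrary: C)
  case 0
  then show ?case by (intro exI[of _ C]) auto
next
  case (Suc j)
  have fin: "finite C" using Suc.prems(1) finite_subset by blast
  show ?case
  proof (cases "\<exists>z0\<in>C. z0 + 1 \<notin> C \<and> z0 + 1 \<le> n")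
    case True
    then obtain z0 where z: "z0 \<in> C" "z0 + 1 \<notin> C" "z0 + 1 \<le> n" by auto
    let ?C = "insert (z0+1) C"
    have c: "card ?C = card C + 1" using fin z by auto
    have "\<exists>A. ?C \<subseteq> A \<and> A \<subseteq> {1..n} \<and> card A = k \<and> gp d A"
      apply (rule Suc.hyps(1))
      using Suc.hyps(2) Suc.prems c z gp_hole[of d C z0] by auto
    then show ?thesis by auto
  next
    case False
    define a where "a = Min C"
    have aC: "a \<in> C" unfolding a_def using fin Suc.prems(2) by auto
    have amin: "\<forall>c\<in>C. a \<le> c" unfolding a_def using fin by auto
    have "{a..n} \<subseteq> C"
      by (rule closed_ivl[OF aC]) (use False in auto)
    have "a \<noteq> 1"
    proof
      assume "a = 1"
      then have "{1..n} \<subseteq> C" using \<open>{a..n} \<subseteq> C\<close> by simp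
      then have "card {1..n} \<le> card C" using fin card_mono by blast
      then show False using Suc.hyps(2) Suc.prems by auto
    qed
    then have a2: "a \<ge> 2" using aC Suc.prems(1) by fastforce
    let ?C = "insert (a-1) C"
    have na: "a - 1 \<notin> C" using amin a2 by fastforce
    have c: "card ?C = card C + 1" using fin na by auto
    have g: "gp d ?C" apply (rule gp_below) using Suc.prems amin a2 aC by auto
    have "\<exists>A. ?C \<subseteq> A \<and> A \<subseteq> {1..n} \<and> card A = k \<and> gp d A"
    proof (rule Suc.hyps(1))
      show "?C \<subseteq> {1..n}" using Suc.prems(1) a2 aC by auto
      show "card ?C \<le> k" using c Suc.hyps(2) by arith
      show "j = k - card ?C" using c Suc.hyps(2) by arith
    qed (use g Suc.prems in auto)
    then show ?thesis by auto
  qed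
qed

lemma sum_pm:
  fixes g :: "nat \<Rightarrow> int"
  assumes "finite A" "\<forall>x\<in>A. g x = 1 \<or> g x = -1"
  shows "sum g A = int (card A) - 2 * int (card {x\<in>A. g x = -1})"
  using assms
proof (induction A rule: finite_induct)
  case empty then show ?case by simp
next
  case (insert x F)
  have e: "{y\<in>insert x F. g y = -1} = (if g x = -1 then insert x {y\<in>F. g y = -1} else {y\<in>F. g y = -1})"
    by auto
  have "finite {y\<in>F. g y = -1}" using insert by auto
  moreover have "x \<notin> {y\<in>F. g y = -1}" using insert by auto
  ultimately show ?case using insert e by (auto split: if_splits)
qed

lemma all_pos:
  fixes g :: "nat \<Rightarrow> int"
  assumes d1: "d \<ge> 1" and k2: "k \<ge> 2" and ev: "even k"
    and pm: "\<forall>x\<in>{1..n}. g x = 1 \<or> g x = -1"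
    and nz: "\<forall>A. A \<subseteq> {1..n} \<and> card A = k \<and> gp d A \<longrightarrow> sum g A \<noteq> 0"
    and base: "sum g {1..k} > 0"
  shows "A \<subseteq> {1..n} \<Longrightarrow> card A = k \<Longrightarrow> gp d A \<Longrightarrow> sum g A > 0"
proof (induction "\<Sum>A" arbitrary: A rule: less_induct)
  case less
  have fin: "finite A" using less.prems(1) finite_subset by blast
  have ne: "A \<noteq> {}" using less.prems k2 by auto
  define M where "M = Max A"
  define a where "a = Min A"
  have MA: "M \<in> A" unfolding M_def using fin ne by auto
  have aA: "a \<in> A" unfolding a_def using fin ne by auto
  have Mmax: "\<forall>x\<in>A. x \<le> M" unfolding M_def using fin by auto
  have amin: "\<forall>x\<in>A. a \<le> x" unfolding a_def using fin by auto
  have evA: "even (sum g B)" if "B \<subseteq> {1..n}" "card B = k" for B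
  proof -
    have "finite B" using that finite_subset by blast
    then have "sum g B = int k - 2 * int (card {x\<in>B. g x = -1})"
      using sum_pm[of B g] pm that by auto
    then show ?thesis using ev by auto
  qed
  have step: "sum g A > 0" if y: "y \<notin> A" "y < M" "y \<ge> 1" "gp d (insert y (A - {M}))" for y
  proof -
    let ?A = "insert y (A - {M})"
    have sub: "?A \<subseteq> {1..n}" using y less.prems(1) MA by auto
    have cA: "card ?A = k" using y fin MA less.prems(2) k2 by (simp add: card_Suc_Diff1)
    have "sum (\<lambda>x. x) A = M + sum (\<lambda>x. x) (A - {M})" using fin MA by (rule sum.remove)
    moreover have "sum (\<lambda>x. x) ?A = y + sum (\<lambda>x. x) (A - {M})" using fin y by simp
    ultimately have "sum (\<lambda>x. x) ?A < sum (\<lambda>x. x) A" using y by simp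
    then have pos: "sum g ?A > 0" using less.hyps[of ?A] sub cA y by auto
    have sA: "sum g ?A = sum g A - g M + g y" using y fin MA by (simp add: sum_diff1)
    have b: "-1 \<le> g M" "g M \<le> 1" "-1 \<le> g y" "g y \<le> 1"
      using pm MA y less.prems(1) sub by force+
    have nz0: "sum g A \<noteq> 0" using nz less.prems by auto
    have "even (sum g A)" using evA less.prems by auto
    then obtain q where q: "sum g A = 2 * q" by (rule evenE)
    have "even (sum g ?A)" using evA sub cA by auto
    then obtain q' where q': "sum g ?A = 2 * q'" by (rule evenE)
    have "q \<noteq> 0" using nz0 q by auto
    then show ?thesis using pos sA b q q' by linarith
  qed
  have gC: "gp d (A - {M})"
  proof -
    have "M \<ge> 1" using MA less.prems(1) by auto
    have "A - {M} = {x\<in>A. x \<le> M - 1}"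
    proof (rule set_eqI)
      fix x show "x \<in> A - {M} \<longleftrightarrow> x \<in> {x\<in>A. x \<le> M - 1}"
        by (cases "x \<in> A") (use Mmax \<open>M \<ge> 1\<close> in auto)
    qed
    then show ?thesis using gp_upto[OF less.prems(3)] by simp
  qed
  have aM: "a < M"
  proof (rule ccontr)
    assume "\<not> a < M"
    then have "A = {M}" using Mmax amin MA by force
    then show False using less.prems k2 by auto
  qed
  show ?case
  proof (cases "\<exists>z0\<in>A. z0 + 1 \<notin> A \<and> z0 < M")
    case True
    then obtain z0 where z: "z0 \<in> A" "z0 + 1 \<notin> A" "z0 < M" by auto
    have "gp d (insert (z0+1) (A - {M}))" using gp_hole[OF gC d1, of z0] z by auto
    moreover have "z0 + 1 < M" using z MA by (metis Suc_eq_plus1 Suc_lessI)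
    ultimately show ?thesis using step[of "z0+1"] z by auto
  next
    case False
    have "{a..M} \<subseteq> A" by (rule closed_ivl[OF aA]) (use False in auto)
    show ?thesis
    proof (cases "a = 1")
      case True
      have "A = {1..M}" using \<open>{a..M} \<subseteq> A\<close> True Mmax amin by auto
      then have "M = k" using less.prems(2) by auto
      then show ?thesis using \<open>A = {1..M}\<close> base by simp
    next
      case False
      then have a2: "a \<ge> 2" using aA less.prems(1) by fastforce
      have "gp d (insert (a-1) (A - {M}))"
        apply (rule gp_below[OF gC]) using amin a2 aA aM d1 by auto
      moreover have "a - 1 \<notin> A" using amin a2 by fastforce
      ultimately show ?thesis using step[of "a-1"] a2 aM by auto
    qed
  qed
qed

definition segS :: "nat \<Rightarrow> nat \<Rightarrow> nat \<Rightarrow> nat \<Rightarrow> nat set" where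
  "segS d a c e = (\<lambda>t. a + d * t) ` {..c} \<union> {e}"

lemma segS_props:
  assumes "a + d * c < e" "e \<le> a + d * (c + 1)"
  shows "gp d (segS d a c e)" "\<forall>x\<in>segS d a c e. a \<le> x \<and> x \<le> e" "a \<in> segS d a c e"
    "e \<in> segS d a c e" "finite (segS d a c e)" "card (segS d a c e) \<le> c + 2"
proof -
  show "gp d (segS d a c e)" unfolding segS_def by (rule gp_ap[OF assms])
  have le: "t \<le> c \<Longrightarrow> a + d * t \<le> a + d * c" for t by simp
  show "\<forall>x\<in>segS d a c e. a \<le> x \<and> x \<le> e" unfolding segS_def using le assms(1)
    by (auto, meson le less_or_eq_imp_le order.strict_trans1)
  show "a \<in> segS d a c e" unfolding segS_def by (auto intro: image_eqI[of _ _ 0])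
  show "e \<in> segS d a c e" unfolding segS_def by auto
  show "finite (segS d a c e)" unfolding segS_def by auto
  have "card ((\<lambda>t. a + d * t) ` {..c}) \<le> c + 1"
    using card_image_le[of "{..c}" "\<lambda>t. a + d * t"] by auto
  then show "card (segS d a c e) \<le> c + 2" unfolding segS_def
    using card_Un_le[of "(\<lambda>t. a + d * t) ` {..c}" "{e}"] by auto
qed

lemma chain:
  fixes p c :: "nat \<Rightarrow> nat"
  assumes cl: "\<forall>i. i < L \<longrightarrow> p i + d * c i < p (Suc i) \<and> p (Suc i) \<le> p i + d * (c i + 1)"
  shows "r \<le> L \<Longrightarrow> gp d ({p 0} \<union> (\<Union>i<r. segS d (p i) (c i) (p (Suc i))))
     \<and> (\<forall>x\<in>{p 0} \<union> (\<Union>i<r. segS d (p i) (c i) (p (Suc i))). p 0 \<le> x \<and> x \<le> p r)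
     \<and> p r \<in> {p 0} \<union> (\<Union>i<r. segS d (p i) (c i) (p (Suc i)))
     \<and> card ({p 0} \<union> (\<Union>i<r. segS d (p i) (c i) (p (Suc i)))) \<le> 1 + r + (\<Sum>i<r. c i)
     \<and> p ` {..r} \<subseteq> {p 0} \<union> (\<Union>i<r. segS d (p i) (c i) (p (Suc i)))
     \<and> finite ({p 0} \<union> (\<Union>i<r. segS d (p i) (c i) (p (Suc i))))"
proof (induction r)
  case 0
  show ?case by (auto simp: gp_def)
next
  case (Suc r)
  let ?C = "{p 0} \<union> (\<Union>i<r. segS d (p i) (c i) (p (Suc i)))"
  let ?S = "segS d (p r) (c r) (p (Suc r))"
  have rL: "r < L" using Suc.prems by auto
  have IH: "gp d ?C" "\<forall>x\<in>?C. p 0 \<le> x \<and> x \<le> p r" "p r \<in> ?C"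
    "card ?C \<le> 1 + r + (\<Sum>i<r. c i)" "p ` {..r} \<subseteq> ?C" "finite ?C"
    using Suc.IH Suc.prems by auto
  have sp: "p r + d * c r < p (Suc r)" "p (Suc r) \<le> p r + d * (c r + 1)" using cl rL by auto
  note S = segS_props[OF sp]
  have eq: "{p 0} \<union> (\<Union>i<Suc r. segS d (p i) (c i) (p (Suc i))) = ?C \<union> ?S"
    by (auto simp: lessThan_Suc)
  have p0r: "p 0 \<le> p r" using IH(2,3) by auto
  have g: "gp d (?C \<union> ?S)"
    by (rule gp_union[OF IH(1) S(1) IH(3) S(3)]) (use IH(2) S(2) in auto)
  have b: "\<forall>x\<in>?C \<union> ?S. p 0 \<le> x \<and> x \<le> p (Suc r)"
    using IH(2) S(2) p0r sp by fastforce
  have u: "?C \<union> ?S = ?C \<union> (?S - {p r})" using IH(3) by blast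
  have "card (?C \<union> ?S) \<le> card ?C + card (?S - {p r})"
    unfolding u by (rule card_Un_le)
  moreover have "card (?S - {p r}) \<le> c r + 1" using S(3,5,6) by (simp add: card_Diff_singleton)
  ultimately have cd: "card (?C \<union> ?S) \<le> 1 + Suc r + (\<Sum>i<Suc r. c i)" using IH(4) by simp
  have im: "p ` {..Suc r} \<subseteq> ?C \<union> ?S" using IH(5) S(4) by (auto simp: atMost_Suc)
  show ?case unfolding eq using g b S(4) cd im IH(6) S(5) by auto
qed

lemma window_arith:
  fixes T m M r h :: nat
  assumes "m \<ge> 2" "T * (m+1) \<le> M" "M - 1 = T * (m-1) + r" "r < m - 1" "m \<le> 2 * h" "h \<le> T" "M \<ge> 1"
  shows False
proof -
  have mm: "m + 1 = (m-1) + 2" using assms(1) by simp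
  have e: "T * (m+1) = T * (m-1) + 2 * T"
    unfolding mm distrib_left by simp
  show False using assms e by linarith
qed

lemma negblock:
  fixes g :: "nat \<Rightarrow> int"
  assumes d1: "d \<ge> 1" and m1: "m \<ge> 1"
    and cmM: "((m+1) div 2) * (m-1) < card N" and Nsub: "N \<subseteq> {1..n}" and Nneg: "\<forall>x\<in>N. g x = -1"
    and dens: "n \<le> card N * (d+1)"
  shows "\<exists>C. C \<subseteq> {1..n} \<and> C \<noteq> {} \<and> gp d C \<and> card C \<le> 2*m \<and> m \<le> card {x\<in>C. g x = -1}"
proof -
  define M where "M = card N"
  have finN: "finite N" using Nsub finite_subset by blast
  define xs where "xs = sorted_list_of_set N"
  define p where "p i = xs ! i" for i
  have sw: "sorted_wrt (<) xs" unfolding xs_def by simp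
  have len: "length xs = M" unfolding xs_def M_def by simp
  have st: "set xs = N" unfolding xs_def using finN by simp
  have pN: "i < M \<Longrightarrow> p i \<in> N" for i unfolding p_def using st len nth_mem by blast
  have pmono: "i < j \<Longrightarrow> j < M \<Longrightarrow> p i < p j" for i j
    unfolding p_def using sorted_wrt_nth_less[OF sw] len by auto
  have pr: "1 \<le> p i \<and> p i \<le> n" if "i < M" for i
  proof -
    have "p i \<in> {1..n}" using pN[OF that] Nsub by blast
    then show ?thesis by auto
  qed
  have M1: "M \<ge> 1" using cmM M_def by auto
  define c where "c i = (p (Suc i) - p i - 1) div d" for i
  have cl: "p i + d * c i < p (Suc i) \<and> p (Suc i) \<le> p i + d * (c i + 1)" if "Suc i < M" for i
  proof -
    define G where "G = p (Suc i) - p i - 1"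
    have lt: "p i < p (Suc i)" using pmono that by auto
    then have G1: "p (Suc i) = p i + G + 1" unfolding G_def by auto
    have a: "d * (G div d) \<le> G" by simp
    have "G = d * (G div d) + G mod d" by simp
    moreover have "G mod d < d" using d1 by simp
    ultimately have b: "G + 1 \<le> d * (G div d) + d" by linarith
    have ci: "c i = G div d" unfolding c_def G_def by simp
    have dd: "d * (G div d + 1) = d * (G div d) + d" by simp
    show ?thesis unfolding ci dd using a b G1 by linarith
  qed
  have tele: "j < M \<Longrightarrow> d * (\<Sum>i<j. c i) + j + p 0 \<le> p j" for j
  proof (induction j)
    case 0 then show ?case by simp
  next
    case (Suc j)
    then have "d * (\<Sum>i<j. c i) + j + p 0 \<le> p j" by auto
    moreover have "p j + d * c j < p (Suc j)" using cl Suc.prems by auto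
    ultimately show ?case by (simp add: algebra_simps)
  qed
  have tot: "(\<Sum>i<M-1. c i) \<le> M"
  proof -
    have "d * (\<Sum>i<M-1. c i) + (M - 1) + p 0 \<le> p (M-1)" using tele[of "M-1"] M1 by auto
    moreover have "p (M-1) \<le> n" "1 \<le> p 0" using pr M1 by auto
    moreover have "n \<le> M * (d+1)" using dens M_def by simp
    ultimately have "d * (\<Sum>i<M-1. c i) + M \<le> M * (d+1)" using M1 by linarith
    then have "d * (\<Sum>i<M-1. c i) \<le> d * M" by (simp add: algebra_simps)
    then show ?thesis using d1 by simp
  qed
  have win: "\<exists>j. j + (m-1) < M \<and> (\<Sum>i<m-1. c (j+i)) \<le> m"
  proof (cases "m = 1")
    case True then show ?thesis using M1 by (intro exI[of _ 0]) auto
  next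
    case False
    then have m2: "m \<ge> 2" using m1 by auto
    define T where "T = (M-1) div (m-1)"
    show ?thesis
    proof (rule ccontr)
      assume H: "\<not> ?thesis"
      have TM: "T * (m-1) \<le> M - 1" unfolding T_def by simp
      have W: "m + 1 \<le> (\<Sum>i\<in>{t*(m-1)..<t*(m-1)+(m-1)}. c i)" if "t < T" for t
      proof -
        have "(t+1) * (m-1) \<le> T * (m-1)" using that by (intro mult_le_mono1) auto
        moreover have "(t+1) * (m-1) = t*(m-1) + (m-1)" by simp
        ultimately have "t*(m-1) + (m-1) < M" using TM M1 by linarith
        then have "m < (\<Sum>i<m-1. c (t*(m-1)+i))" using H by auto
        moreover have "(\<Sum>i\<in>{t*(m-1)..<t*(m-1)+(m-1)}. c i) = (\<Sum>i<m-1. c (t*(m-1)+i))"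
          using sum.shift_bounds_nat_ivl[of c 0 "t*(m-1)" "m-1"]
          by (simp add: atLeast0LessThan add.commute)
        ultimately show ?thesis by simp
      qed
      have "T * (m+1) = (\<Sum>t<T. m + 1)" by simp
      also have "\<dots> \<le> (\<Sum>t<T. (\<Sum>i\<in>{t*(m-1)..<t*(m-1)+(m-1)}. c i))"
        by (rule sum_mono) (use W in auto)
      also have "\<dots> = (\<Sum>i<T*(m-1). c i)" by (rule sum.nat_group)
      also have "\<dots> \<le> (\<Sum>i<M-1. c i)" by (rule sum_mono2) (use TM in auto)
      also have "\<dots> \<le> M" by (rule tot)
      finally have A: "T * (m+1) \<le> M" .
      have B: "M - 1 = T * (m-1) + (M-1) mod (m-1)" unfolding T_def by (rule div_mult_mod_eq[symmetric])
      have C: "(M-1) mod (m-1) < m - 1" using m2 by simp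
      have "((m+1) div 2) * (m-1) \<le> M - 1" using cmM M_def by auto
      then have "((m+1) div 2) * (m-1) div (m-1) \<le> T" unfolding T_def by (rule div_le_mono)
      then have D: "(m+1) div 2 \<le> T" using m2 by simp
      have E: "m \<le> 2 * ((m+1) div 2)" by simp
      show False using window_arith[OF m2 A B C E D M1] .
    qed
  qed
  then obtain j where j: "j + (m-1) < M" "(\<Sum>i<m-1. c (j+i)) \<le> m" by auto
  define p' where "p' i = p (j+i)" for i
  define c' where "c' i = c (j+i)" for i
  have cl': "\<forall>i. i < m-1 \<longrightarrow> p' i + d * c' i < p' (Suc i) \<and> p' (Suc i) \<le> p' i + d * (c' i + 1)"
    unfolding p'_def c'_def using cl j(1) by auto
  define C where "C = {p' 0} \<union> (\<Union>i<m-1. segS d (p' i) (c' i) (p' (Suc i)))"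
  have ch: "gp d C" "\<forall>x\<in>C. p' 0 \<le> x \<and> x \<le> p' (m-1)" "card C \<le> 1 + (m-1) + (\<Sum>i<m-1. c' i)"
    "p' ` {..m-1} \<subseteq> C" "finite C"
    using chain[OF cl', of "m-1"] unfolding C_def by auto
  have "C \<subseteq> {1..n}"
  proof
    fix x assume "x \<in> C"
    then have "p' 0 \<le> x" "x \<le> p' (m-1)" using ch(2) by auto
    moreover have "1 \<le> p' 0" "p' (m-1) \<le> n" unfolding p'_def using pr j(1) by auto
    ultimately show "x \<in> {1..n}" by auto
  qed
  moreover have "C \<noteq> {}" using ch(4) by auto
  moreover have "card C \<le> 2*m" using ch(3) j(2) m1 unfolding c'_def by auto
  moreover have "m \<le> card {x\<in>C. g x = -1}"
  proof -
    have inj: "inj_on p' {..m-1}"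
    proof (rule inj_onI)
      fix a b assume ab: "a \<in> {..m-1}" "b \<in> {..m-1}" "p' a = p' b"
      show "a = b"
      proof (rule ccontr)
        assume "a \<noteq> b"
        then have "a < b \<or> b < a" by auto
        then show False using pmono[of "j+a" "j+b"] pmono[of "j+b" "j+a"] ab j(1) unfolding p'_def by auto
      qed
    qed
    have "p' ` {..m-1} \<subseteq> {x\<in>C. g x = -1}"
      using ch(4) pN Nneg j(1) unfolding p'_def by auto
    then have "card (p' ` {..m-1}) \<le> card {x\<in>C. g x = -1}" using ch(5) by (intro card_mono) auto
    moreover have "card (p' ` {..m-1}) = m" using card_image[OF inj] m1 by simp
    ultimately show ?thesis by simp
  qed
  ultimately show ?thesis using ch(1) by blast
qed

lemma gp_ivl: "d \<ge> 1 \<Longrightarrow> gp d {a..b}"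
  unfolding gp_def by (auto intro!: bexI[of _ "Suc _"])

lemma cm_ident:
  fixes k m s :: nat
  assumes "k = 2 * m" "m \<ge> 1" "s = ((k - 2) div 2) mod 2"
  shows "k^2 + 4*s = 8 * (((m+1) div 2) * (m-1)) + 2*s*k + 4"
proof (cases "even m")
  case True
  then obtain r where r: "m = 2*r" by (rule evenE)
  then have "r \<ge> 1" using assms(2) by simp
  define q where "q = r - 1"
  have q: "m = 2*q + 2" using r \<open>r \<ge> 1\<close> unfolding q_def by simp
  have k: "k = 4*q+4" using q assms(1) by simp
  have s: "s = 1" using assms(3) k by simp
  have a: "(m+1) div 2 = q + 1" using q by simp
  have b: "m - 1 = 2*q+1" using q by simp
  have "(4*q+4)^2 + 4*1 = 8 * ((q+1) * (2*q+1)) + 2*1*(4*q+4) + (4::nat)"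
    by (simp add: power2_eq_square algebra_simps)
  then show ?thesis unfolding a b k s .
next
  case False
  then obtain q where q: "m = 2*q + 1" using oddE by blast
  have k: "k = 4*q+2" using q assms(1) by simp
  have s: "s = 0" using assms(3) k by simp
  have a: "(m+1) div 2 = q + 1" using q by simp
  have b: "m - 1 = 2*q" using q by simp
  have "(4*q+2)^2 + 4*0 = 8 * ((q+1) * (2*q)) + 2*0*(4*q+2) + (4::nat)"
    by (simp add: power2_eq_square algebra_simps)
  then show ?thesis unfolding a b k s .
qed

theorem theorem3p1:
  fixes k d n s :: nat and f :: "nat \<Rightarrow> int"
  assumes "k > 0" "d > 0" "n > 0"
    and "even k" and "d \<ge> 2"
    and "s = ((k - 2) div 2) mod 2"
    and "n \<ge> k"
    and "real n \<ge> (real d + 1) / 8 * (real k ^ 2 - 2 * real s * real k + 4 * real s - 4) + 1"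
    and "\<forall>i\<in>{1..n}. f i = -1 \<or> f i = 1"
    and "\<bar>(\<Sum>i\<in>{1..n}. f i)\<bar> \<le> int n - int k"
    and "real_of_int \<bar>\<Sum>i\<in>{1..n}. f i\<bar> \<le> (real d - 1) / (real d + 1) * real n"
  shows "\<exists>A. dk_block d k n A \<and> (\<Sum>i\<in>A. f i) = 0"
proof (rule ccontr)
  assume H: "\<not> ?thesis"
  define m where "m = k div 2"
  have km: "k = 2 * m" unfolding m_def using assms(4) by simp
  have m1: "m \<ge> 1" using km assms(1) by simp
  have d1: "d \<ge> 1" using assms(2) by simp
  have blk: "dk_block d k n A" if "A \<subseteq> {1..n}" "card A = k" "gp d A" for A
    using gp_dk[of A n k d] that finite_subset[OF that(1)] by auto
  have nzf: "sum f A \<noteq> 0" if "A \<subseteq> {1..n}" "card A = k" "gp d A" for A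
    using H blk[OF that] by auto
  have base_nz: "sum f {1..k} \<noteq> 0" using nzf[of "{1..k}"] assms(7) gp_ivl[OF d1] by auto
  define g where "g x = (if sum f {1..k} > 0 then f x else - f x)" for x
  have sg: "sum g A = (if sum f {1..k} > 0 then sum f A else - sum f A)" for A
    unfolding g_def by (auto simp: sum_negf)
  have pm: "\<forall>x\<in>{1..n}. g x = 1 \<or> g x = -1" using assms(9) unfolding g_def by auto
  have nz: "\<forall>A. A \<subseteq> {1..n} \<and> card A = k \<and> gp d A \<longrightarrow> sum g A \<noteq> 0"
    using nzf sg by auto
  have base: "sum g {1..k} > 0" using base_nz sg[of "{1..k}"] by auto
  have pos: "sum g A > 0" if "A \<subseteq> {1..n}" "card A = k" "gp d A" for A
    using all_pos[OF d1 _ assms(4) pm nz base that] km m1 by auto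
  define N where "N = {x\<in>{1..n}. g x = -1}"
  have Nsub: "N \<subseteq> {1..n}" unfolding N_def by auto
  have Nneg: "\<forall>x\<in>N. g x = -1" unfolding N_def by auto
  have sumN: "sum g {1..n} = int n - 2 * int (card N)"
    using sum_pm[of "{1..n}" g] pm unfolding N_def by auto
  have absg: "\<bar>sum g {1..n}\<bar> = \<bar>sum f {1..n}\<bar>" using sg by auto
  have dens: "n \<le> card N * (d+1)"
  proof -
    have "sum g {1..n} \<le> \<bar>sum g {1..n}\<bar>" by (rule abs_ge_self)
    then have "int n - 2 * int (card N) \<le> \<bar>sum f {1..n}\<bar>" using sumN absg by simp
    then have "real_of_int (int n - 2 * int (card N)) \<le> real_of_int \<bar>sum f {1..n}\<bar>"
      by (simp only: of_int_le_iff)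
    then have "real_of_int (int n - 2 * int (card N)) \<le> (real d - 1) / (real d + 1) * real n"
      using assms(11) by linarith
    then have "(real n - 2 * real (card N)) * (real d + 1) \<le> (real d - 1) * real n"
      by (simp add: field_simps)
    then have "real n \<le> real (card N) * (real d + 1)" by (simp add: algebra_simps)
    then have "real n \<le> real (card N * (d + 1))" by (simp only: of_nat_mult of_nat_add of_nat_1)
    then show ?thesis by (simp only: of_nat_le_iff)
  qed
  define cm where "cm = ((m+1) div 2) * (m-1)"
  have cmM: "cm < card N"
  proof -
    have "k^2 + 4*s = 8 * cm + 2*s*k + 4" unfolding cm_def using cm_ident[OF km m1 assms(6)] .
    then have "real (k^2 + 4*s) = real (8 * cm + 2*s*k + 4)" by simp
    then have "real k ^ 2 - 2 * real s * real k + 4 * real s - 4 = 8 * real cm" by simp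
    then have "real n \<ge> (real d + 1) * real cm + 1" using assms(8) by simp
    moreover have "real n \<le> real (card N) * (real d + 1)"
    proof -
      have "real n \<le> real (card N * (d+1))" using dens by (simp only: of_nat_le_iff)
      then show ?thesis by (simp add: algebra_simps)
    qed
    ultimately have "real cm * (real d + 1) < real (card N) * (real d + 1)"
      by (simp add: algebra_simps)
    then have "real cm < real (card N)" by (simp add: mult_less_cancel_right)
    then show ?thesis by simp
  qed
  obtain C where C: "C \<subseteq> {1..n}" "C \<noteq> {}" "gp d C" "card C \<le> 2*m" "m \<le> card {x\<in>C. g x = -1}"
    using negblock[OF d1 m1 cmM[unfolded cm_def] Nsub Nneg dens] by blast
  obtain A where A: "C \<subseteq> A" "A \<subseteq> {1..n}" "card A = k" "gp d A"
    using pad[OF C(1,2,3) _ assms(7) d1] C(4) km by auto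
  have finA: "finite A" using A(2) finite_subset by blast
  have "sum g A = int (card A) - 2 * int (card {x\<in>A. g x = -1})"
    using sum_pm[OF finA] pm A(2) by auto
  moreover have "card {x\<in>C. g x = -1} \<le> card {x\<in>A. g x = -1}"
    using A(1) finA by (intro card_mono) auto
  ultimately have "sum g A \<le> 0" using C(5) A(3) km by linarith
  then show False using pos[OF A(2,3,4)] by simp
qed

end
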